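(* Let $S$ be epsilon-strongly graded and let $r,s\in B(\mathcal{E}_G)^*$ be distinct epsilon-central elements. Then: (i) $(rS_g)(rS_h)=rS_{gh}$ for all $g,h\in N(r)$; in particular $rS=\bigoplus_{g\in N(r)}rS_g$ (with $rS_g=0$ for $g\notin N(r)$), and $rS$ is a strongly $N(r)$-graded ring with identity $r$; (ii) with $N=N(r)\cap N(s)$, the ring $(rS)_N\oplus(sS)_N$, where $(rS)_N=\bigoplus_{g\in N}rS_g$ and $(sS)_N=\bigoplus_{g\in N}sS_g$, is strongly $N$-graded (with components $rS_g\oplus sS_g$, $g\in N$) and has identity $r+s$.
   Context: $G$ is a group with identity $e$; $S=\bigoplus_{g\in G}S_g$ is an associative unital ring graded by $G$, $R=S_e$, $XY$ denotes finite sums of products. $S$ is epsilon-strongly graded: each ideal $S_gS_{g^{-1}}$ of $R$ has an identity $\epsilon_g$ with $\epsilon_gs=s=s\epsilon_{g^{-1}}$ for $s\in S_g$; $\epsilon_e=1$; each $\epsilon_g$ is an idempotent in $Z(R)$. $B(\mathcal{E}_G)$ is the multiplicative semigroup generated by $\{\epsilon_g:g\in G\}$, $B(\mathcal{E}_G)^*=B(\mathcal{E}_G)\setminus\{0\}$, ordered by $a\le b$ iff $a=ab$. For $r\in B(\mathcal{E}_G)^*$, $N(r)=\{g\in G:r\epsilon_g=r\}$. An element $r\in B(\mathcal{E}_G)^*$ is epsilon-central if it is minimal in $B(\mathcal{E}_G)^*$ and $N(r)$ is a subgroup of $G$ (equivalently, for minimal $r$, $r$ lies in the center of $S$). A ring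 graded by a group $H$ is strongly $H$-graded if $A_gA_h=A_{gh}$ for all $g,h\in H$. *)

theory Defs
  imports Main
begin

text \<open>The grading group G is a type of class group_add, written
additively: the product gh is g + h, the identity e is 0, and g inverse is - g.
The graded ring S is the whole type 'a :: ring_1; its homogeneous components
are given by a family Sg :: 'g \<Rightarrow> 'a set.\<close>

definition subgroup_add :: "'g::group_add set \<Rightarrow> bool" where
  "subgroup_add H \<longleftrightarrow> 0 \<in> H \<and> (\<forall>a\<in>H. \<forall>b\<in>H. a + b \<in> H) \<and> (\<forall>a\<in>H. - a \<in> H)"

definition setmult :: "'a::ring_1 set \<Rightarrow> 'a set \<Rightarrow> 'a set" where
  "setmult X Y = {(\<Sum>i<n. x i * y i) | (n::nat) x y. \<forall>i<n. x i \<in> X \<and> y i \<in> Y}"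

definition lmult :: "'a::ring_1 \<Rightarrow> 'a set \<Rightarrow> 'a set" where
  "lmult r X = (\<lambda>x. r * x) ` X"

definition span_of :: "'g set \<Rightarrow> ('g \<Rightarrow> 'a::ring_1 set) \<Rightarrow> 'a set" where
  "span_of H C = {sum f F | F f. finite F \<and> F \<subseteq> H \<and> (\<forall>g\<in>F. f g \<in> C g)}"

text \<open>A (a subset of the ambient ring, with the induced operations) is graded by the
(sub)group H with components C g (g in H): A is the (internal) direct sum of the
additive subgroups C g, and C g C h is contained in C (g h).\<close>
definition graded_by :: "'a::ring_1 set \<Rightarrow> 'g::group_add set \<Rightarrow> ('g \<Rightarrow> 'a set) \<Rightarrow> bool" where
  "graded_by A H C \<longleftrightarrow>
     subgroup_add H \<and>
     (\<forall>g\<in>H. C g \<subseteq> A \<and> 0 \<in> C g \<and> (\<forall>x\<in>C g. \<forall>y\<in>C g. x + y \<in> C g) \<and> (\<forall>x\<in>C g. - x \<in> C g)) \<and>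
     A = span_of H C \<and>
     (\<forall>F f. finite F \<longrightarrow> F \<subseteq> H \<longrightarrow> (\<forall>g\<in>F. f g \<in> C g) \<longrightarrow> sum f F = 0 \<longrightarrow> (\<forall>g\<in>F. f g = 0)) \<and>
     (\<forall>g\<in>H. \<forall>h\<in>H. \<forall>x\<in>C g. \<forall>y\<in>C h. x * y \<in> C (g + h))"

definition strongly_graded_by :: "'a::ring_1 set \<Rightarrow> 'g::group_add set \<Rightarrow> ('g \<Rightarrow> 'a set) \<Rightarrow> bool" where
  "strongly_graded_by A H C \<longleftrightarrow> graded_by A H C \<and> (\<forall>g\<in>H. \<forall>h\<in>H. setmult (C g) (C h) = C (g + h))"

definition has_identity :: "'a::ring_1 set \<Rightarrow> 'a \<Rightarrow> bool" where
  "has_identity A u \<longleftrightarrow> u \<in> A \<and> (\<forall>x\<in>A. u * x = x \<and> x * u = x)"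

definition eps_strong :: "('g::group_add \<Rightarrow> 'a::ring_1 set) \<Rightarrow> ('g \<Rightarrow> 'a) \<Rightarrow> bool" where
  "eps_strong S eps \<longleftrightarrow>
     (\<forall>g. eps g \<in> setmult (S g) (S (- g)) \<and>
          (\<forall>t\<in>setmult (S g) (S (- g)). eps g * t = t \<and> t * eps g = t) \<and>
          (\<forall>s\<in>S g. eps g * s = s \<and> s * eps (- g) = s))"

definition BE :: "('g \<Rightarrow> 'a::ring_1) \<Rightarrow> 'a set" where
  "BE eps = {prod_list (map eps gs) | gs. gs \<noteq> []}"

definition BE_star :: "('g \<Rightarrow> 'a::ring_1) \<Rightarrow> 'a set" where
  "BE_star eps = BE eps - {0}"

definition BE_le :: "'a::ring_1 \<Rightarrow> 'a \<Rightarrow> bool" where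
  "BE_le a b \<longleftrightarrow> a = a * b"

definition minimal_BE :: "('g \<Rightarrow> 'a::ring_1) \<Rightarrow> 'a \<Rightarrow> bool" where
  "minimal_BE eps r \<longleftrightarrow> r \<in> BE_star eps \<and> (\<forall>b\<in>BE_star eps. BE_le b r \<longrightarrow> b = r)"

definition Nset :: "('g \<Rightarrow> 'a::ring_1) \<Rightarrow> 'a \<Rightarrow> 'g set" where
  "Nset eps r = {g. r * eps g = r}"

definition eps_central :: "('g::group_add \<Rightarrow> 'a::ring_1) \<Rightarrow> 'a \<Rightarrow> bool" where
  "eps_central eps r \<longleftrightarrow> minimal_BE eps r \<and> subgroup_add (Nset eps r)"

end

theory Submission imports Defs begin

lemma setmultI: "(\<forall>i<(n::nat). x i \<in> X \<and> y i \<in> Y) \<Longrightarrow> (\<Sum>i<n. x i * y i) \<in> setmult X Y"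
  unfolding setmult_def mem_Collect_eq by (intro exI[of _ n] exI[of _ x] exI[of _ y]) simp

lemma setmultE: "t \<in> setmult X Y \<Longrightarrow> (\<And>(n::nat) x y. t = (\<Sum>i<n. x i * y i) \<Longrightarrow> \<forall>i<n. x i \<in> X \<and> y i \<in> Y \<Longrightarrow> P) \<Longrightarrow> P"
  unfolding setmult_def mem_Collect_eq by (elim exE conjE) blast

locale epsctx =
  fixes S :: "'g::group_add \<Rightarrow> 'a::ring_1 set" and eps :: "'g \<Rightarrow> 'a"
  assumes gr: "graded_by UNIV UNIV S" and es: "eps_strong S eps"
begin

lemma zero_in: "0 \<in> S g" using gr by (auto simp: graded_by_def)
lemma add_in: "x\<in>S g \<Longrightarrow> y \<in> S g \<Longrightarrow> x+y\<in>S g" using gr by (auto simp: graded_by_def)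
lemma neg_in: "x\<in>S g \<Longrightarrow> - x\<in>S g" using gr by (auto simp: graded_by_def)
lemma mul_in: "x\<in>S g \<Longrightarrow> y \<in> S h \<Longrightarrow> x*y\<in>S (g+h)" using gr by (auto simp: graded_by_def)
lemma span_all: "x \<in> span_of UNIV S" using gr by (auto simp: graded_by_def)
lemma uniq: "finite F \<Longrightarrow> \<forall>g\<in>F. f g \<in> S g \<Longrightarrow> sum f F = 0 \<Longrightarrow> g\<in>F \<Longrightarrow> f g = 0"
  using gr unfolding graded_by_def by blast
lemma decomp: obtains F f where "finite F" "\<forall>g\<in>F. f g \<in> S g" "x = sum f F"
  using span_all[of x] unfolding span_of_def by blast

lemma sum_in: "finite F \<Longrightarrow> (\<forall>i\<in>F. f i \<in> S g) \<Longrightarrow> sum f F \<in> S g"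
  by (induction F rule: finite_induct) (auto simp: zero_in add_in)

lemma es1: "eps g \<in> setmult (S g) (S (-g))" using es by (auto simp: eps_strong_def)
lemma es2: "t \<in> setmult (S g) (S(-g)) \<Longrightarrow> eps g * t = t" "t \<in> setmult (S g) (S(-g)) \<Longrightarrow> t * eps g = t"
  using es by (auto simp: eps_strong_def)
lemma es3: "s \<in> S g \<Longrightarrow> eps g * s = s" "s \<in> S g \<Longrightarrow> s * eps (-g) = s"
  using es by (auto simp: eps_strong_def)

lemma setmult_sub: "setmult (S g) (S h) \<subseteq> S (g+h)"
proof
  fix t assume "t \<in> setmult (S g) (S h)"
  then obtain n :: nat and x y where t: "t = (\<Sum>i<n. x i * y i)" "\<forall>i<n. x i \<in> S g \<and> y i \<in> S h"
    by (rule setmultE)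
  show "t \<in> S (g+h)" unfolding t(1) by (rule sum_in) (auto simp: t(2) mul_in)
qed

lemma eps_in: "eps g \<in> S 0"
  using setmult_sub[of g "-g"] es1[of g] by auto

lemma eps_comm: assumes "x \<in> S 0" shows "x * eps g = eps g * x"
proof -
  obtain n :: nat and u v where e: "eps g = (\<Sum>i<n. u i * v i)" "\<forall>i<n. u i \<in> S g \<and> v i \<in> S (-g)"
    using es1[of g] by (rule setmultE)
  have "x * eps g = (\<Sum>i<n. (x * u i) * v i)" by (simp add: e(1) sum_distrib_left mult.assoc)
  also have "\<dots> \<in> setmult (S g) (S (-g))"
    by (rule setmultI) (use e(2) mul_in[OF assms, of _ g] in auto)
  finally have a: "eps g * (x * eps g) = x * eps g" by (rule es2)
  have "eps g * x = (\<Sum>i<n. u i * (v i * x))" by (simp add: e(1) sum_distrib_right mult.assoc)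
  also have "\<dots> \<in> setmult (S g) (S (-g))"
    by (rule setmultI) (use e(2) mul_in[OF _ assms, of _ "-g"] in auto)
  finally have b: "(eps g * x) * eps g = eps g * x" by (rule es2)
  show ?thesis using a b by (metis mult.assoc)
qed

lemma eps_idem: "eps g * eps g = eps g" using es2(1)[OF es1] .

lemma eps_shift: assumes u: "u \<in> S g" shows "u * eps h = eps (g+h) * u"
proof -
  obtain n :: nat and x y where e: "eps h = (\<Sum>i<n. x i * y i)" "\<forall>i<n. x i \<in> S h \<and> y i \<in> S (-h)"
    using es1[of h] by (rule setmultE)
  have "eps (g+h) * (u * eps h) = (\<Sum>i<n. (eps (g+h) * (u * x i)) * y i)"
    by (simp add: e(1) sum_distrib_left mult.assoc)
  also have "\<dots> = (\<Sum>i<n. (u * x i) * y i)"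
    using e(2) es3(1)[OF mul_in[OF u]] by (intro sum.cong) auto
  also have "\<dots> = u * eps h" by (simp add: e(1) sum_distrib_left mult.assoc)
  finally have a: "eps (g+h) * (u * eps h) = u * eps h" .
  obtain m :: nat and a b where f: "eps (g+h) = (\<Sum>i<m. a i * b i)" "\<forall>i<m. a i \<in> S (g+h) \<and> b i \<in> S (-(g+h))"
    using es1[of "g+h"] by (rule setmultE)
  have bu: "b i * u \<in> S (-h)" if "i < m" for i
  proof -
    have "b i * u \<in> S (-(g+h) + g)" using mul_in f(2) that u by blast
    moreover have "-(g+h) + g = -h" by (simp add: minus_add add.assoc)
    ultimately show ?thesis by simp
  qed
  have "eps (g+h) * u * eps h = (\<Sum>i<m. a i * ((b i * u) * eps (-(-h))))"
    by (simp add: f(1) sum_distrib_right mult.assoc)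
  also have "\<dots> = (\<Sum>i<m. a i * (b i * u))"
    using bu es3(2)[of _ "-h", simplified] by (intro sum.cong) auto
  also have "\<dots> = eps (g+h) * u" by (simp add: f(1) sum_distrib_right mult.assoc)
  finally show ?thesis using a by (metis mult.assoc)
qed

abbreviation P where "P (L::'g list) \<equiv> prod_list (map eps L)"

lemma P_in: "L \<noteq> [] \<Longrightarrow> P L \<in> S 0"
proof (induction L)
  case Nil then show ?case by simp
next
  case (Cons a L)
  show ?case
  proof (cases "L = []")
    case True then show ?thesis using eps_in by simp
  next
    case False then show ?thesis using mul_in[OF eps_in Cons.IH[OF False]] by simp
  qed
qed

lemma P_comm0: "x \<in> S 0 \<Longrightarrow> x * P L = P L * x"
  by (induction L) (simp_all, metis eps_comm mult.assoc)

lemma P_comm: "P L1 * P L2 = P L2 * P L1"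
  by (cases "L1 = []") (simp_all add: P_comm0 P_in)

lemma P_append: "P (L1 @ L2) = P L1 * P L2" by simp

lemma P_idem: "P L * P L = P L"
proof (induction L)
  case Nil then show ?case by simp
next
  case (Cons a L)
  have "P (a#L) * P (a#L) = eps a * (P L * eps a) * P L" by (simp add: mult.assoc)
  also have "\<dots> = eps a * (eps a * P L) * P L"
    using P_comm0[OF eps_in, of a L] by simp
  also have "\<dots> = (eps a * eps a) * (P L * P L)" by (simp add: mult.assoc)
  finally show ?case using Cons eps_idem by simp
qed

lemma P_shift: "u \<in> S g \<Longrightarrow> u * P L = P (map ((+) g) L) * u"
proof (induction L)
  case Nil then show ?case by simp
next
  case (Cons h L)
  have "u * P (h#L) = (u * eps h) * P L" by (simp add: mult.assoc)
  also have "\<dots> = eps (g+h) * (u * P L)" by (simp add: eps_shift[OF Cons.prems] mult.assoc)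
  finally show ?case using Cons by (simp add: mult.assoc)
qed

lemma P_welldef: assumes "P L1 = P L2"
  shows "P (map ((+) h) L1) * eps h = P (map ((+) h) L2) * eps h"
proof -
  obtain n :: nat and x y where e: "eps h = (\<Sum>i<n. x i * y i)" "\<forall>i<n. x i \<in> S h \<and> y i \<in> S (-h)"
    using es1[of h] by (rule setmultE)
  have *: "P (map ((+) h) L) * eps h = (\<Sum>i<n. x i * P L * y i)" for L
    unfolding e(1) sum_distrib_left
    by (intro sum.cong refl) (use e(2) P_shift in \<open>metis mult.assoc lessThan_iff\<close>)
  show ?thesis using * assms by simp
qed


lemma eps0: "x \<in> S 0 \<Longrightarrow> y \<in> S 0 \<Longrightarrow> eps 0 * (x*y) = x*y"
proof -
  assume "x \<in> S 0" "y \<in> S 0"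
  then have "(\<Sum>i<(1::nat). (\<lambda>_. x) i * (\<lambda>_. y) i) \<in> setmult (S 0) (S (-0))"
    by (intro setmultI) auto
  then show ?thesis using es2(1)[of "x*y" 0] by simp
qed

lemma eps0P: "L \<noteq> [] \<Longrightarrow> eps 0 * P L = P L"
  using eps0[OF P_in P_in, of L L] P_idem[of L] by simp

lemma mem_factor: "h \<in> set L \<Longrightarrow> P L * eps h = P L"
proof (induction L)
  case Nil then show ?case by simp
next
  case (Cons a L)
  show ?case
  proof (cases "h = a")
    case True
    have "P (a#L) * eps h = eps a * (P L * eps a)" using True by (simp add: mult.assoc)
    also have "\<dots> = (eps a * eps a) * P L" using P_comm0[OF eps_in, of a L] by (simp add: mult.assoc)
    finally show ?thesis using eps_idem by simp
  next
    case False
    then show ?thesis using Cons by (simp add: mult.assoc)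
  qed
qed

lemma absorb: "\<forall>h\<in>set L. x * eps h = x \<Longrightarrow> x * P L = x"
  by (induction L) (simp_all, metis mult.assoc)

lemma BE_P: "r \<in> BE eps \<longleftrightarrow> (\<exists>hs. hs \<noteq> [] \<and> r = P hs)"
  unfolding BE_def by auto

lemma BE_I: "L \<noteq> [] \<Longrightarrow> P L \<noteq> 0 \<Longrightarrow> P L \<in> BE_star eps"
  unfolding BE_star_def BE_def by auto

lemma minE: "minimal_BE eps r \<Longrightarrow> \<exists>hs. hs \<noteq> [] \<and> r = P hs"
  unfolding minimal_BE_def BE_star_def BE_def by auto

lemma min_zero:
  assumes m: "minimal_BE eps r" and g: "r * eps g \<noteq> r" shows "r * eps g = 0"
proof (rule ccontr)
  assume nz: "r * eps g \<noteq> 0"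
  from m obtain hs where hs: "hs \<noteq> []" "r = P hs"
    using minE by blast
  have "r * eps g = P (hs @ [g])" using hs by simp
  then have "r * eps g \<in> BE_star eps" using nz BE_I[of "hs @ [g]"] by simp
  moreover have "BE_le (r * eps g) r"
  proof -
    have "r * eps g * r = P (hs @ [g]) * P hs" using hs by simp
    also have "\<dots> = P hs * P (hs @ [g])" by (rule P_comm)
    also have "\<dots> = (P hs * P hs) * eps g" by (simp add: mult.assoc)
    finally show ?thesis unfolding BE_le_def using P_idem hs by simp
  qed
  ultimately have "r * eps g = r" using m unfolding minimal_BE_def by blast
  then show False using g by simp
qed

lemma prod_zero:
  assumes mr: "minimal_BE eps r" and ms: "minimal_BE eps s" and rs: "r \<noteq> s"
  shows "r * s = 0"
proof (rule ccontr)
  assume nz: "r * s \<noteq> 0"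
  from mr obtain hs where hs: "hs \<noteq> []" "r = P hs"
    using minE by blast
  from ms obtain ks where ks: "ks \<noteq> []" "s = P ks"
    using minE by blast
  have "r * s = P (hs @ ks)" using hs ks by simp
  then have inB: "r * s \<in> BE_star eps" using nz hs BE_I[of "hs @ ks"] by simp
  have "r * s * r = r * s" using hs ks P_comm[of ks hs] P_idem[of hs] by (metis mult.assoc)
  then have "r * s = r" using mr inB unfolding minimal_BE_def BE_le_def by metis
  moreover have "r * s * s = r * s" using hs ks P_idem[of ks] by (metis mult.assoc)
  then have "r * s = s" using ms inB unfolding minimal_BE_def BE_le_def by metis
  ultimately show False using rs by simp
qed

lemma central_hom:
  assumes c: "eps_central eps r" and u: "u \<in> S g"
  shows "r * u = u * r"
proof -
  have m: "minimal_BE eps r" and sg: "subgroup_add (Nset eps r)"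
    using c unfolding eps_central_def by auto
  from m obtain hs where hs: "hs \<noteq> []" "r = P hs"
    using minE by blast
  have N: "x \<in> Nset eps r \<longleftrightarrow> r * eps x = r" for x unfolding Nset_def by simp
  have Nadd: "x \<in> Nset eps r \<Longrightarrow> y \<in> Nset eps r \<Longrightarrow> x + y \<in> Nset eps r" for x y
    using sg unfolding subgroup_add_def by blast
  have Nneg: "x \<in> Nset eps r \<Longrightarrow> - x \<in> Nset eps r" for x
    using sg unfolding subgroup_add_def by blast
  have allN: "\<forall>h\<in>set hs. h \<in> Nset eps r" using mem_factor hs N by auto
  show ?thesis
  proof (cases "g \<in> Nset eps r")
    case True
    have ng: "-g \<in> Nset eps r" using Nneg True .
    define c where "c = P ((-g) # map ((+) (-g)) hs)"
    define a where "a = P (g # map ((+) g) hs)"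
    have rc: "r * c = r" unfolding c_def
      by (rule absorb) (use allN ng Nadd N in auto)
    have ra: "r * a = r" unfolding a_def
      by (rule absorb) (use allN True Nadd N in auto)
    have "P hs = P (hs @ (g # map ((+) g) hs))" using ra hs a_def by simp
    from P_welldef[OF this, of "-g"]
    have "P (map ((+) (-g)) hs) * eps (-g) = P (map ((+) (-g)) hs) * (eps 0 * P hs) * eps (-g)"
      by (simp add: comp_def mult.assoc)
    also have "\<dots> = P (map ((+) (-g)) hs) * P hs * eps (-g)" using eps0P hs by simp
    also have "\<dots> = P (map ((+) (-g)) hs) * eps (-g) * P hs"
      by (simp add: mult.assoc P_comm0[OF eps_in])
    finally have "c = c * r" unfolding c_def using hs P_comm0[OF eps_in, of "-g" "map ((+) (-g)) hs"]
      by simp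
    then have cr: "c = r" using rc P_comm[of "(-g) # map ((+) (-g)) hs" hs] hs c_def by simp
    have "P hs = P ((-g) # map ((+) (-g)) hs)" using cr hs c_def by simp
    from P_welldef[OF this, of g]
    have "P (map ((+) g) hs) * eps g = (eps 0 * P hs) * eps g"
      by (simp add: comp_def mult.assoc)
    also have "\<dots> = r" using eps0P hs True N by simp
    finally have ar: "P (map ((+) g) hs) * eps g = r" .
    have "u * r = P (map ((+) g) hs) * u" using P_shift[OF u] hs by simp
    also have "\<dots> = P (map ((+) g) hs) * (eps g * u)" using es3(1)[OF u] by simp
    also have "\<dots> = r * u" using ar by (simp add: mult.assoc[symmetric])
    finally show ?thesis by simp
  next
    case False
    have "-g \<notin> Nset eps r" using Nneg[of "-g"] False by auto
    then have z2: "r * eps (-g) = 0" using min_zero[OF m] N by blast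
    have z1: "r * eps g = 0" using min_zero[OF m] N False by blast
    have "r * u = r * eps g * u" using es3(1)[OF u] by (simp add: mult.assoc)
    also have "\<dots> = 0" using z1 by simp
    finally have "r * u = 0" .
    moreover have "u * r = u * eps (-g) * r" using es3(2)[OF u] by simp
    moreover have "\<dots> = u * (r * eps (-g))" using hs by (simp add: mult.assoc P_comm0[OF eps_in])
    ultimately show ?thesis using z2 by simp
  qed
qed

lemma central:
  assumes c: "eps_central eps r" shows "r * x = x * r"
proof -
  obtain F f where F: "finite F" "\<forall>g\<in>F. f g \<in> S g" "x = sum f F" by (rule decomp)
  show ?thesis unfolding F(3) sum_distrib_left sum_distrib_right
    using central_hom[OF c] F(2) by (intro sum.cong) auto
qed

lemma zero_out:
  assumes c: "eps_central eps r" and u: "u \<in> S g" and g: "g \<notin> Nset eps r"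
  shows "r * u = 0"
proof -
  have m: "minimal_BE eps r" using c unfolding eps_central_def by auto
  have z1: "r * eps g = 0" using min_zero[OF m] g unfolding Nset_def by blast
  have "r * u = r * eps g * u" using es3(1)[OF u] by (simp add: mult.assoc)
  then show ?thesis using z1 by simp
qed

lemma r_props:
  assumes c: "eps_central eps r" shows "r * r = r" "r \<in> S 0" "r \<noteq> 0"
proof -
  have m: "minimal_BE eps r" using c unfolding eps_central_def by auto
  from m obtain hs where hs: "hs \<noteq> []" "r = P hs"
    using minE by blast
  show "r * r = r" "r \<in> S 0" using hs P_idem P_in by auto
  show "r \<noteq> 0" using m unfolding minimal_BE_def BE_star_def by auto
qed

lemma N_sub: "eps_central eps r \<Longrightarrow> subgroup_add (Nset eps r)"
  unfolding eps_central_def by auto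

end

lemma setmult_add1: "t \<in> setmult X Y \<Longrightarrow> a \<in> X \<Longrightarrow> b \<in> Y \<Longrightarrow> t + a * b \<in> setmult X Y"
proof -
  assume t: "t \<in> setmult X Y" and ab: "a \<in> X" "b \<in> Y"
  obtain n :: nat and x y where e: "t = (\<Sum>i<n. x i * y i)" "\<forall>i<n. x i \<in> X \<and> y i \<in> Y"
    using t by (rule setmultE)
  have s1: "(\<Sum>i<n. (x(n:=a)) i * (y(n:=b)) i) = (\<Sum>i<n. x i * y i)" by (rule sum.cong) auto
  have "t + a * b = (\<Sum>i<Suc n. (x(n:=a)) i * (y(n:=b)) i)"
    unfolding e(1) sum.lessThan_Suc s1 by simp
  also have "\<dots> \<in> setmult X Y"
  proof (rule setmultI, intro allI impI)
    fix i assume "i < Suc n"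
    then show "(x(n:=a)) i \<in> X \<and> (y(n:=b)) i \<in> Y" using e(2) ab by (cases "i = n") auto
  qed
  finally show ?thesis .
qed

lemma setmult_zero: "(0::'a::ring_1) \<in> setmult X Y"
  using setmultI[of 0 _ X _ Y] by simp

lemma setmult_add: "t1 \<in> setmult X Y \<Longrightarrow> t2 \<in> setmult X Y \<Longrightarrow> t1 + t2 \<in> setmult X Y"
proof -
  assume t1: "t1 \<in> setmult X Y" and t2: "t2 \<in> setmult X Y"
  obtain m :: nat and x y where e: "t2 = (\<Sum>i<m. x i * y i)" "\<forall>i<m. x i \<in> X \<and> y i \<in> Y"
    using t2 by (rule setmultE)
  have "\<forall>k\<le>m. t1 + (\<Sum>i<k. x i * y i) \<in> setmult X Y"
  proof (intro allI impI)
    fix k assume "k \<le> m" then show "t1 + (\<Sum>i<k. x i * y i) \<in> setmult X Y"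
    proof (induction k)
      case 0 then show ?case using t1 by simp
    next
      case (Suc k)
      then have "t1 + (\<Sum>i<k. x i * y i) + x k * y k \<in> setmult X Y"
        using e(2) by (intro setmult_add1) auto
      then show ?case by (simp add: add.assoc)
    qed
  qed
  then show ?thesis using e(1) by simp
qed

lemma setmult_mono: assumes "X \<subseteq> X'" "Y \<subseteq> Y'" shows "setmult X Y \<subseteq> setmult X' Y'"
proof
  fix t assume "t \<in> setmult X Y"
  then obtain n :: nat and x y where e: "t = (\<Sum>i<n. x i * y i)" "\<forall>i<n. x i \<in> X \<and> y i \<in> Y"
    by (rule setmultE)
  show "t \<in> setmult X' Y'" unfolding e(1) by (rule setmultI) (use e(2) assms in blast)
qed

context epsctx begin

lemma lm_mem: "x \<in> lmult r X \<longleftrightarrow> (\<exists>a\<in>X. x = r * a)" unfolding lmult_def by (rule image_iff)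

context
  fixes r assumes c: "eps_central eps r"
begin

lemma rr: "r * r = r" using r_props[OF c] by simp
lemma rS0: "r \<in> S 0" using r_props[OF c] by simp
lemma rc: "r * x = x * r" using central[OF c] .

lemma lm_sub: "lmult r (S g) \<subseteq> S g"
  using mul_in[OF rS0] unfolding lmult_def by fastforce

lemma lm_fix: "x \<in> lmult r X \<Longrightarrow> r * x = x"
  unfolding lmult_def using rr by (auto simp: mult.assoc[symmetric])

lemma lm_prod: "(r * a) * (r * b) = r * (a * b)"
proof -
  have "(r * a) * (r * b) = r * (a * r) * b" by (simp add: mult.assoc)
  also have "\<dots> = (r * r) * a * b" using rc[of a] by (simp add: mult.assoc)
  finally show ?thesis using rr by (simp add: mult.assoc)
qed

lemma lm_0: "0 \<in> lmult r (S g)" using zero_in unfolding lm_mem by force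
lemma lm_add: "x \<in> lmult r (S g) \<Longrightarrow> y \<in> lmult r (S g) \<Longrightarrow> x + y \<in> lmult r (S g)"
  unfolding lm_mem by (metis add_in distrib_left)
lemma lm_neg: "x \<in> lmult r (S g) \<Longrightarrow> - x \<in> lmult r (S g)"
  unfolding lm_mem by (metis neg_in mult_minus_right)
lemma lm_mul: "x \<in> lmult r (S g) \<Longrightarrow> y \<in> lmult r (S h) \<Longrightarrow> x * y \<in> lmult r (S (g+h))"
  unfolding lm_mem by (metis lm_prod mul_in)

lemma lm_sum: "(\<forall>i<n. f i \<in> lmult r (S g)) \<Longrightarrow> (\<Sum>i<(n::nat). f i) \<in> lmult r (S g)"
  by (induction n) (auto intro: lm_add lm_0)

lemma part1:
  assumes g: "g \<in> Nset eps r" and h: "h \<in> Nset eps r"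
  shows "setmult (lmult r (S g)) (lmult r (S h)) = lmult r (S (g + h))"
proof
  show "setmult (lmult r (S g)) (lmult r (S h)) \<subseteq> lmult r (S (g + h))"
  proof
    fix t assume "t \<in> setmult (lmult r (S g)) (lmult r (S h))"
    then obtain n :: nat and x y where e: "t = (\<Sum>i<n. x i * y i)"
      "\<forall>i<n. x i \<in> lmult r (S g) \<and> y i \<in> lmult r (S h)" by (rule setmultE)
    have "\<forall>i<n. x i * y i \<in> lmult r (S (g+h))" using e(2) lm_mul by blast
    then show "t \<in> lmult r (S (g + h))" using e(1) lm_sum by simp
  qed
next
  show "lmult r (S (g + h)) \<subseteq> setmult (lmult r (S g)) (lmult r (S h))"
  proof
    fix t assume "t \<in> lmult r (S (g + h))"
    then obtain x where x: "x \<in> S (g+h)" "t = r * x" unfolding lm_mem by blast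
    obtain n :: nat and u v where e: "eps g = (\<Sum>i<n. u i * v i)" "\<forall>i<n. u i \<in> S g \<and> v i \<in> S (-g)"
      using es1[of g] by (rule setmultE)
    have rg: "r * eps g = r" using g unfolding Nset_def by simp
    have vx: "v i * x \<in> S h" if "i < n" for i
    proof -
      have "v i * x \<in> S (-g + (g+h))" using mul_in e(2) that x(1) by blast
      then show ?thesis by (simp add: add.assoc[symmetric])
    qed
    have "t = r * eps g * x" using x rg by simp
    also have "\<dots> = (\<Sum>i<n. (r * u i) * (r * (v i * x)))"
      unfolding e(1) sum_distrib_left sum_distrib_right lm_prod by (simp add: mult.assoc)
    also have "\<dots> \<in> setmult (lmult r (S g)) (lmult r (S h))"
      by (rule setmultI) (use e(2) vx in \<open>auto simp: lm_mem\<close>)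
    finally show "t \<in> setmult (lmult r (S g)) (lmult r (S h))" .
  qed
qed

lemma part2: assumes "g \<notin> Nset eps r" shows "lmult r (S g) = {0}"
proof -
  have "x = 0" if "x \<in> lmult r (S g)" for x using that zero_out[OF c _ assms] unfolding lm_mem by blast
  then show ?thesis using lm_0[of g] by blast
qed

lemma span_r: "span_of H (\<lambda>g. lmult r (S g)) \<subseteq> lmult r UNIV"
proof
  fix x assume "x \<in> span_of H (\<lambda>g. lmult r (S g))"
  then obtain F f where F: "finite F" "\<forall>g\<in>F. f g \<in> lmult r (S g)" "x = sum f F"
    unfolding span_of_def by blast
  have "x = r * x" unfolding F(3) sum_distrib_left using F(2) lm_fix by (intro sum.cong) auto
  then show "x \<in> lmult r UNIV" unfolding lm_mem by blast
qed

lemma part3: "strongly_graded_by (lmult r UNIV) (Nset eps r) (\<lambda>g. lmult r (S g))"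
  unfolding strongly_graded_by_def graded_by_def
proof (intro conjI ballI allI impI)
  show "subgroup_add (Nset eps r)" using N_sub[OF c] .
  show "lmult r (S g) \<subseteq> lmult r UNIV" for g unfolding lmult_def by auto
  show "0 \<in> lmult r (S g)" for g by (rule lm_0)
  show "x + y \<in> lmult r (S g)" if "x \<in> lmult r (S g)" "y \<in> lmult r (S g)" for g x y
    using that by (rule lm_add)
  show "- x \<in> lmult r (S g)" if "x \<in> lmult r (S g)" for g x using that by (rule lm_neg)
  show "x * y \<in> lmult r (S (g + h))" if "x \<in> lmult r (S g)" "y \<in> lmult r (S h)" for g h x y
    using that by (rule lm_mul)
  show "setmult (lmult r (S g)) (lmult r (S h)) = lmult r (S (g + h))"
    if "g \<in> Nset eps r" "h \<in> Nset eps r" for g h using part1 that by blast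
  show "f g = 0" if "finite F" "F \<subseteq> Nset eps r" "\<forall>g\<in>F. f g \<in> lmult r (S g)" "sum f F = 0" "g \<in> F"
    for F f g using uniq[of F f g] that lm_sub by blast
  show "lmult r UNIV = span_of (Nset eps r) (\<lambda>g. lmult r (S g))"
  proof
    show "span_of (Nset eps r) (\<lambda>g. lmult r (S g)) \<subseteq> lmult r UNIV" by (rule span_r)
    show "lmult r UNIV \<subseteq> span_of (Nset eps r) (\<lambda>g. lmult r (S g))"
    proof
      fix t assume "t \<in> lmult r UNIV"
      then obtain x where t: "t = r * x" unfolding lm_mem by blast
      obtain F f where F: "finite F" "\<forall>g\<in>F. f g \<in> S g" "x = sum f F" by (rule decomp)
      have "t = (\<Sum>g\<in>F. r * f g)" unfolding t F(3) sum_distrib_left ..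
      also have "\<dots> = (\<Sum>g\<in>F \<inter> Nset eps r. r * f g)"
        using F zero_out[OF c] by (intro sum.mono_neutral_right) auto
      finally show "t \<in> span_of (Nset eps r) (\<lambda>g. lmult r (S g))"
        unfolding span_of_def using F by (auto simp: lm_mem)
    qed
  qed
qed

lemma part4: "has_identity (lmult r UNIV) r"
  unfolding has_identity_def
proof (intro conjI ballI)
  show "r \<in> lmult r UNIV" unfolding lm_mem by (rule bexI[of _ 1]) simp_all
  fix x assume x: "x \<in> lmult r UNIV"
  show "r * x = x" using lm_fix[OF x] .
  then show "x * r = x" using rc[of x] by simp
qed

end
end

context epsctx begin
context
  fixes r s assumes cr: "eps_central eps r" and cs: "eps_central eps s" and rs: "r \<noteq> s"
begin

lemma rs0: "r * s = 0" "s * r = 0"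
  using prod_zero[of r s] cr cs rs central[OF cr, of s] unfolding eps_central_def by auto

definition "NN = Nset eps r \<inter> Nset eps s"
definition "CC g = {a + b | a b. a \<in> lmult r (S g) \<and> b \<in> lmult s (S g)}"
definition "AA = {a + b | a b. a \<in> span_of NN (\<lambda>g. lmult r (S g)) \<and> b \<in> span_of NN (\<lambda>g. lmult s (S g))}"

lemma r_on_s: "b \<in> lmult s X \<Longrightarrow> r * b = 0"
  unfolding lm_mem using rs0 by (auto simp: mult.assoc[symmetric])
lemma s_on_r: "b \<in> lmult r X \<Longrightarrow> s * b = 0"
  unfolding lm_mem using rs0 by (auto simp: mult.assoc[symmetric])

lemma CC_dec: "y \<in> CC g \<Longrightarrow> y = r * y + s * y \<and> r * y \<in> lmult r (S g) \<and> s * y \<in> lmult s (S g)"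
  unfolding CC_def using lm_fix[OF cr] lm_fix[OF cs] r_on_s s_on_r
  by (auto simp: distrib_left)

lemma CC_d1: "y \<in> CC g \<Longrightarrow> y = r * y + s * y" using CC_dec by blast
lemma CC_d2: "y \<in> CC g \<Longrightarrow> r * y \<in> lmult r (S g)" using CC_dec by blast
lemma CC_d3: "y \<in> CC g \<Longrightarrow> s * y \<in> lmult s (S g)" using CC_dec by blast

lemma CC_I: "a \<in> lmult r (S g) \<Longrightarrow> b \<in> lmult s (S g) \<Longrightarrow> a + b \<in> CC g"
  unfolding CC_def by blast

lemma CC_r: "a \<in> lmult r (S g) \<Longrightarrow> a \<in> CC g" using CC_I[of a g 0] lm_0[OF cs] by simp
lemma CC_s: "b \<in> lmult s (S g) \<Longrightarrow> b \<in> CC g" using CC_I[of 0 g b] lm_0[OF cr] by simp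

lemma CC_0: "0 \<in> CC g" using CC_r lm_0[OF cr] by blast

lemma CC_add: assumes x: "x \<in> CC g" and y: "y \<in> CC g" shows "x + y \<in> CC g"
proof -
  have a: "r*x + r*y \<in> lmult r (S g)" by (rule lm_add[OF cr CC_d2[OF x] CC_d2[OF y]])
  have b: "s*x + s*y \<in> lmult s (S g)" by (rule lm_add[OF cs CC_d3[OF x] CC_d3[OF y]])
  have "x + y = (r*x + s*x) + (r*y + s*y)" by (rule arg_cong2[where f="(+)"]) (fact CC_d1[OF x], fact CC_d1[OF y])
  also have "\<dots> = (r*x + r*y) + (s*x + s*y)" by (simp add: algebra_simps)
  finally show ?thesis using CC_I[OF a b] by simp
qed

lemma CC_neg: assumes x: "x \<in> CC g" shows "- x \<in> CC g"
proof -
  have a: "- (r*x) \<in> lmult r (S g)" by (rule lm_neg[OF cr CC_d2[OF x]])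
  have b: "- (s*x) \<in> lmult s (S g)" by (rule lm_neg[OF cs CC_d3[OF x]])
  have "- x = - (r*x + s*x)" by (rule arg_cong[OF CC_d1[OF x]])
  also have "\<dots> = - (r*x) + - (s*x)" by (simp add: algebra_simps)
  finally show ?thesis using CC_I[OF a b] by simp
qed

lemma CC_mul: assumes x: "x \<in> CC g" and y: "y \<in> CC h" shows "x * y \<in> CC (g + h)"
proof -
  have rxy: "r * (x * y) = (r * x) * (r * y)" using lm_prod[OF cr] by simp
  have sxy: "s * (x * y) = (s * x) * (s * y)" using lm_prod[OF cs] by simp
  have a: "r * (x * y) \<in> lmult r (S (g+h))" unfolding rxy by (rule lm_mul[OF cr CC_d2[OF x] CC_d2[OF y]])
  have b: "s * (x * y) \<in> lmult s (S (g+h))" unfolding sxy by (rule lm_mul[OF cs CC_d3[OF x] CC_d3[OF y]])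
  have "x * y = (r*x + s*x) * y" by (rule arg_cong[OF CC_d1[OF x]])
  also have "\<dots> = r * (x * y) + s * (x * y)" by (simp add: algebra_simps)
  finally show ?thesis using CC_I[OF a b] by simp
qed

lemma CC_sum: "(\<forall>i<n. f i \<in> CC g) \<Longrightarrow> (\<Sum>i<(n::nat). f i) \<in> CC g"
  by (induction n) (auto intro: CC_add CC_0)

lemma NN_sub: "subgroup_add NN"
  using N_sub[OF cr] N_sub[OF cs] unfolding NN_def subgroup_add_def by blast

lemma span_single: "g \<in> H \<Longrightarrow> x \<in> C g \<Longrightarrow> x \<in> span_of H C"
  unfolding span_of_def by (rule CollectI, rule exI[of _ "{g}"], rule exI[of _ "\<lambda>_. x"]) simp

lemma span_fix_r: "a \<in> span_of NN (\<lambda>g. lmult r (S g)) \<Longrightarrow> r * a = a \<and> s * a = 0"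
  using span_r[OF cr] lm_fix[OF cr] s_on_r by blast
lemma span_fix_s: "b \<in> span_of NN (\<lambda>g. lmult s (S g)) \<Longrightarrow> s * b = b \<and> r * b = 0"
  using span_r[OF cs] lm_fix[OF cs] r_on_s by blast

lemma AA_span: "AA = span_of NN CC"
proof
  show "AA \<subseteq> span_of NN CC"
  proof
    fix x assume "x \<in> AA"
    then obtain a b where x: "x = a + b" and a: "a \<in> span_of NN (\<lambda>g. lmult r (S g))"
      and b: "b \<in> span_of NN (\<lambda>g. lmult s (S g))" unfolding AA_def by blast
    obtain Fa fa where Fa: "finite Fa" "Fa \<subseteq> NN" "\<forall>g\<in>Fa. fa g \<in> lmult r (S g)" "a = sum fa Fa"
      using a unfolding span_of_def by blast
    obtain Fb fb where Fb: "finite Fb" "Fb \<subseteq> NN" "\<forall>g\<in>Fb. fb g \<in> lmult s (S g)" "b = sum fb Fb"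
      using b unfolding span_of_def by blast
    define ga where "ga g = (if g \<in> Fa then fa g else 0)" for g
    define gb where "gb g = (if g \<in> Fb then fb g else 0)" for g
    have "a = sum ga (Fa \<union> Fb)" unfolding Fa(4)
      by (rule sum.mono_neutral_cong_right[symmetric]) (use Fa Fb in \<open>auto simp: ga_def\<close>)
    moreover have "b = sum gb (Fa \<union> Fb)" unfolding Fb(4)
      by (rule sum.mono_neutral_cong_right[symmetric]) (use Fa Fb in \<open>auto simp: gb_def\<close>)
    ultimately have "x = sum (\<lambda>g. ga g + gb g) (Fa \<union> Fb)" using x by (simp add: sum.distrib)
    moreover have "ga g \<in> lmult r (S g)" for g using Fa(3) lm_0[OF cr] by (simp add: ga_def)
    moreover have "gb g \<in> lmult s (S g)" for g using Fb(3) lm_0[OF cs] by (simp add: gb_def)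
    ultimately have "\<forall>g\<in>Fa \<union> Fb. ga g + gb g \<in> CC g" "x = sum (\<lambda>g. ga g + gb g) (Fa \<union> Fb)"
      using CC_I by blast+
    then show "x \<in> span_of NN CC" unfolding span_of_def using Fa Fb by blast
  qed
next
  show "span_of NN CC \<subseteq> AA"
  proof
    fix x assume "x \<in> span_of NN CC"
    then obtain F f where F: "finite F" "F \<subseteq> NN" "\<forall>g\<in>F. f g \<in> CC g" "x = sum f F"
      unfolding span_of_def by blast
    have "x = (\<Sum>g\<in>F. r * f g) + (\<Sum>g\<in>F. s * f g)" unfolding F(4) sum.distrib[symmetric]
      using F(3) CC_d1 by (intro sum.cong) blast+
    moreover have "(\<Sum>g\<in>F. r * f g) \<in> span_of NN (\<lambda>g. lmult r (S g))"
      unfolding span_of_def using F CC_d2 by blast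
    moreover have "(\<Sum>g\<in>F. s * f g) \<in> span_of NN (\<lambda>g. lmult s (S g))"
      unfolding span_of_def using F CC_d3 by blast
    ultimately show "x \<in> AA" unfolding AA_def by blast
  qed
qed

lemma part5: "strongly_graded_by AA NN CC"
  unfolding strongly_graded_by_def graded_by_def
proof (intro conjI ballI allI impI)
  show "subgroup_add NN" by (rule NN_sub)
  show "CC g \<subseteq> AA" if g: "g \<in> NN" for g
  proof
    fix x assume "x \<in> CC g"
    then obtain a b where "x = a + b" "a \<in> lmult r (S g)" "b \<in> lmult s (S g)" unfolding CC_def by blast
    moreover have "a \<in> span_of NN (\<lambda>g. lmult r (S g))" by (rule span_single[OF g]) fact
    moreover have "b \<in> span_of NN (\<lambda>g. lmult s (S g))" by (rule span_single[OF g]) fact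
    ultimately show "x \<in> AA" unfolding AA_def by blast
  qed
  show "0 \<in> CC g" for g by (rule CC_0)
  show "x + y \<in> CC g" if "x \<in> CC g" "y \<in> CC g" for g x y using that by (rule CC_add)
  show "- x \<in> CC g" if "x \<in> CC g" for g x using that by (rule CC_neg)
  show "x * y \<in> CC (g + h)" if "x \<in> CC g" "y \<in> CC h" for g h x y using that by (rule CC_mul)
  show "AA = span_of NN CC" by (rule AA_span)
  show "f g = 0" if F: "finite F" "F \<subseteq> NN" "\<forall>g\<in>F. f g \<in> CC g" "sum f F = 0" and g: "g \<in> F"
    for F f g
  proof -
    have r1: "(\<Sum>g\<in>F. r * f g) = 0" using F(4) by (simp add: sum_distrib_left[symmetric])
    have r2: "\<forall>g\<in>F. r * f g \<in> S g" using F(3) CC_d2 lm_sub[OF cr] by (meson subsetD)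
    have r3: "r * f g = 0" using uniq[OF F(1) r2 r1 g] by simp
    have s1: "(\<Sum>g\<in>F. s * f g) = 0" using F(4) by (simp add: sum_distrib_left[symmetric])
    have s2: "\<forall>g\<in>F. s * f g \<in> S g" using F(3) CC_d3 lm_sub[OF cs] by (meson subsetD)
    have s3: "s * f g = 0" using uniq[OF F(1) s2 s1 g] by simp
    have "f g = r * f g + s * f g" using CC_d1 F(3) g by blast
    then have "f g = 0 + 0" unfolding r3 s3 .
    then show ?thesis by simp
  qed
  show "setmult (CC g) (CC h) = CC (g + h)" if g: "g \<in> NN" and h: "h \<in> NN" for g h
  proof
    show "setmult (CC g) (CC h) \<subseteq> CC (g + h)"
    proof
      fix t assume "t \<in> setmult (CC g) (CC h)"
      then obtain n :: nat and x y where e: "t = (\<Sum>i<n. x i * y i)"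
        "\<forall>i<n. x i \<in> CC g \<and> y i \<in> CC h" by (rule setmultE)
      have "\<forall>i<n. x i * y i \<in> CC (g + h)" using e(2) CC_mul by blast
      then show "t \<in> CC (g + h)" unfolding e(1) by (rule CC_sum)
    qed
    show "CC (g + h) \<subseteq> setmult (CC g) (CC h)"
    proof
      fix z assume "z \<in> CC (g + h)"
      then obtain a b where z: "z = a + b" "a \<in> lmult r (S (g+h))" "b \<in> lmult s (S (g+h))"
        unfolding CC_def by blast
      have "a \<in> setmult (lmult r (S g)) (lmult r (S h))" using part1[OF cr] g h z(2) unfolding NN_def by blast
      moreover have "setmult (lmult r (S g)) (lmult r (S h)) \<subseteq> setmult (CC g) (CC h)"
        by (rule setmult_mono) (auto intro: CC_r)
      ultimately have a: "a \<in> setmult (CC g) (CC h)" by (rule subsetD[rotated])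
      have "b \<in> setmult (lmult s (S g)) (lmult s (S h))" using part1[OF cs] g h z(3) unfolding NN_def by blast
      moreover have "setmult (lmult s (S g)) (lmult s (S h)) \<subseteq> setmult (CC g) (CC h)"
        by (rule setmult_mono) (auto intro: CC_s)
      ultimately have b: "b \<in> setmult (CC g) (CC h)" by (rule subsetD[rotated])
      show "z \<in> setmult (CC g) (CC h)" using setmult_add[OF a b] z(1) by simp
    qed
  qed
qed

lemma part6: "has_identity AA (r + s)"
  unfolding has_identity_def
proof (intro conjI ballI)
  have z: "0 \<in> NN" using NN_sub unfolding subgroup_add_def by blast
  have "r \<in> lmult r (S 0)" unfolding lmult_def using rr[OF cr] rS0[OF cr] by (metis image_eqI)
  then have a: "r \<in> span_of NN (\<lambda>g. lmult r (S g))" by (rule span_single[OF z])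
  have "s \<in> lmult s (S 0)" unfolding lmult_def using rr[OF cs] rS0[OF cs] by (metis image_eqI)
  then have b: "s \<in> span_of NN (\<lambda>g. lmult s (S g))" by (rule span_single[OF z])
  show "r + s \<in> AA" unfolding AA_def using a b by blast
next
  fix x assume "x \<in> AA"
  then obtain a b where x: "x = a + b" and a: "a \<in> span_of NN (\<lambda>g. lmult r (S g))"
      and b: "b \<in> span_of NN (\<lambda>g. lmult s (S g))" unfolding AA_def by blast
  show "(r + s) * x = x" using x span_fix_r[OF a] span_fix_s[OF b] by (simp add: algebra_simps)
  have "x * (r + s) = x * r + x * s" by (simp add: algebra_simps)
  also have "\<dots> = r * x + s * x" using central[OF cr, of x] central[OF cs, of x] by simp
  also have "\<dots> = (r + s) * x" by (simp add: algebra_simps)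
  finally show "x * (r + s) = x" using \<open>(r + s) * x = x\<close> by simp
qed

lemma part56:
  "strongly_graded_by {a + b | a b. a \<in> span_of (Nset eps r \<inter> Nset eps s) (\<lambda>g. lmult r (S g)) \<and>
                                b \<in> span_of (Nset eps r \<inter> Nset eps s) (\<lambda>g. lmult s (S g))}
     (Nset eps r \<inter> Nset eps s) (\<lambda>g. {a + b | a b. a \<in> lmult r (S g) \<and> b \<in> lmult s (S g)})
   \<and> has_identity {a + b | a b. a \<in> span_of (Nset eps r \<inter> Nset eps s) (\<lambda>g. lmult r (S g)) \<and>
                                b \<in> span_of (Nset eps r \<inter> Nset eps s) (\<lambda>g. lmult s (S g))} (r + s)"
proof -
  have e: "CC = (\<lambda>g. {a + b | a b. a \<in> lmult r (S g) \<and> b \<in> lmult s (S g)})"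
    by (rule ext) (simp add: CC_def)
  show ?thesis using part5 part6 unfolding AA_def NN_def e by (rule conjI)
qed

end
end

theorem mainTheorem9:
  fixes S :: "'g::group_add \<Rightarrow> 'a::ring_1 set"
    and eps :: "'g \<Rightarrow> 'a"
    and r s :: 'a
  assumes graded: "graded_by UNIV UNIV S"
    and epsS: "eps_strong S eps"
    and cr: "eps_central eps r"
    and cs: "eps_central eps s"
    and rs: "r \<noteq> s"
  shows "(\<forall>g\<in>Nset eps r. \<forall>h\<in>Nset eps r.
            setmult (lmult r (S g)) (lmult r (S h)) = lmult r (S (g + h)))
       \<and> (\<forall>g. g \<notin> Nset eps r \<longrightarrow> lmult r (S g) = {0})
       \<and> strongly_graded_by (lmult r UNIV) (Nset eps r) (\<lambda>g. lmult r (S g))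
       \<and> has_identity (lmult r UNIV) r
       \<and> (let N = Nset eps r \<inter> Nset eps s;
              A = {a + b | a b. a \<in> span_of N (\<lambda>g. lmult r (S g)) \<and>
                                b \<in> span_of N (\<lambda>g. lmult s (S g))}
          in strongly_graded_by A N
               (\<lambda>g. {a + b | a b. a \<in> lmult r (S g) \<and> b \<in> lmult s (S g)})
             \<and> has_identity A (r + s))"
proof -
  interpret epsctx S eps using graded epsS by unfold_locales
  have p1: "\<forall>g\<in>Nset eps r. \<forall>h\<in>Nset eps r.
            setmult (lmult r (S g)) (lmult r (S h)) = lmult r (S (g + h))"
    using part1[OF cr] by blast
  have p2: "\<forall>g. g \<notin> Nset eps r \<longrightarrow> lmult r (S g) = {0}" using part2[OF cr] by blast
  note q = part56[OF cr cs rs]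
  show ?thesis unfolding Let_def
    apply (intro conjI)
         apply (rule p1)
        apply (rule p2)
       apply (rule part3[OF cr])
      apply (rule part4[OF cr])
     apply (rule q[THEN conjunct1])
    apply (rule q[THEN conjunct2])
    done
qed

end
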